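(* Let $S$ be a semigroup with finite $\mathcal{R}$-height, and let $A$ be a right ideal of $S$. Let $n$ be the maximum length of a chain of $\mathcal{R}$-classes of $S$ that are contained in $A$. Then $\mathrm{H}_{\mathcal{R}}(A)\leq 2n-1$.
   Context: For a semigroup $S$, $S^1$ denotes $S$ with an identity adjoined if necessary. Green's preorder: $a\leq_{\mathcal{R}} b$ iff $aS^1\subseteq bS^1$; $\mathcal{R}$ is the associated equivalence. $\mathcal{R}$-classes are ordered by $R_a\leq R_b$ iff $a\leq_{\mathcal{R}} b$, and the $\mathcal{R}$-height $\mathrm{H}_{\mathcal{R}}(S)$ is the supremum of the cardinalities of chains of $\mathcal{R}$-classes. A right ideal is a non-empty subset $A$ with $AS\subseteq A$; $\mathrm{H}_{\mathcal{R}}(A)$ is computed in the semigroup $A$ itself. *)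

theory Defs
  imports Main "HOL-Library.Extended_Nat"
begin

text \<open>All Green notions are relative
to the carrier T, using T^1 (identity adjoined if necessary).\<close>

definition subsemigroup :: "'a::semigroup_mult set \<Rightarrow> bool" where
  "subsemigroup T \<longleftrightarrow> (\<forall>x\<in>T. \<forall>y\<in>T. x * y \<in> T)"

definition R_le :: "'a::semigroup_mult set \<Rightarrow> 'a \<Rightarrow> 'a \<Rightarrow> bool" where
  "R_le T a b \<longleftrightarrow> a = b \<or> (\<exists>t\<in>T. a = b * t)"

definition R_eq :: "'a::semigroup_mult set \<Rightarrow> 'a \<Rightarrow> 'a \<Rightarrow> bool" where
  "R_eq T a b \<longleftrightarrow> R_le T a b \<and> R_le T b a"

definition R_class :: "'a::semigroup_mult set \<Rightarrow> 'a \<Rightarrow> 'a set" where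
  "R_class T a = {b \<in> T. R_eq T a b}"

definition R_classes :: "'a::semigroup_mult set \<Rightarrow> 'a set set" where
  "R_classes T = R_class T ` T"

definition R_class_le :: "'a::semigroup_mult set \<Rightarrow> 'a set \<Rightarrow> 'a set \<Rightarrow> bool" where
  "R_class_le T X Y \<longleftrightarrow> (\<exists>x\<in>X. \<exists>y\<in>Y. R_le T x y)"

definition R_chain :: "'a::semigroup_mult set \<Rightarrow> 'a set set \<Rightarrow> bool" where
  "R_chain T C \<longleftrightarrow> C \<subseteq> R_classes T \<and>
     (\<forall>X\<in>C. \<forall>Y\<in>C. R_class_le T X Y \<or> R_class_le T Y X)"

text \<open>R-height: supremum of the cardinalities of chains of R-classes
(an infinite chain has finite subchains of every size, so it suffices to take finite chains).\<close>
definition R_height :: "'a::semigroup_mult set \<Rightarrow> enat" where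
  "R_height T = Sup {enat (card C) | C. R_chain T C \<and> finite C}"

definition right_ideal :: "'a::semigroup_mult set \<Rightarrow> 'a set \<Rightarrow> bool" where
  "right_ideal S A \<longleftrightarrow> A \<noteq> {} \<and> A \<subseteq> S \<and> (\<forall>a\<in>A. \<forall>s\<in>S. a * s \<in> A)"

end

theory Submission
  imports Defs
begin

lemma finite_min_rel:
  assumes "finite F" "F \<noteq> {}"
    and "\<forall>x\<in>F. \<forall>y\<in>F. P x y \<or> P y x"
    and "\<forall>x y z. P x y \<longrightarrow> P y z \<longrightarrow> P x z"
  shows "\<exists>m\<in>F. \<forall>x\<in>F. P m x"
  using assms
proof (induction F rule: finite_ne_induct)
  case (singleton x)
  then show ?case by auto
next
  case (insert x F)
  then obtain m where m: "m \<in> F" "\<forall>y\<in>F. P m y" by auto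
  show ?case
  proof (cases "P x m")
    case True
    then show ?thesis using m insert.prems by blast
  next
    case False
    then have "P m x" using insert.prems m by blast
    then show ?thesis using m by blast
  qed
qed

lemma R_le_trans:
  assumes "\<forall>x\<in>T. \<forall>y\<in>T. x * y \<in> T" "R_le T a b" "R_le T b c"
  shows "R_le T a c"
  using assms unfolding R_le_def by (metis mult.assoc)

lemma R_le_mono:
  assumes "A \<subseteq> S" "R_le A a b" shows "R_le S a b"
  using assms unfolding R_le_def by blast

lemma R_class_self: "a \<in> T \<Longrightarrow> a \<in> R_class T a"
  unfolding R_class_def R_eq_def R_le_def by auto

lemma R_class_eq:
  assumes "\<forall>x\<in>T. \<forall>y\<in>T. x * y \<in> T" "R_eq T a b"
  shows "R_class T a = R_class T b"
  using assms R_le_trans[OF assms(1)] unfolding R_class_def R_eq_def by blast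

lemma chain_lemma:
  assumes "right_ideal S A" "Z \<subseteq> A"
    and "\<forall>z\<in>Z. \<forall>z'\<in>Z. R_le S z z' \<or> R_le S z' z"
  shows "R_chain S (R_class S ` Z) \<and> (\<forall>X\<in>R_class S ` Z. X \<subseteq> A)"
proof -
  have AS: "A \<subseteq> S" using assms(1) unfolding right_ideal_def by auto
  have "R_class S ` Z \<subseteq> R_classes S" unfolding R_classes_def using AS assms(2) by auto
  moreover have "\<forall>X\<in>R_class S ` Z. \<forall>Y\<in>R_class S ` Z. R_class_le S X Y \<or> R_class_le S Y X"
  proof (intro ballI)
    fix X Y assume "X \<in> R_class S ` Z" "Y \<in> R_class S ` Z"
    then obtain z z' where "z \<in> Z" "z' \<in> Z" "X = R_class S z" "Y = R_class S z'" by auto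
    moreover have "z \<in> S" "z' \<in> S" using \<open>z \<in> Z\<close> \<open>z' \<in> Z\<close> AS assms(2) by auto
    ultimately show "R_class_le S X Y \<or> R_class_le S Y X"
      unfolding R_class_le_def using R_class_self assms(3) by metis
  qed
  moreover have "\<forall>X\<in>R_class S ` Z. X \<subseteq> A"
  proof
    fix X assume "X \<in> R_class S ` Z"
    then obtain z where z: "z \<in> Z" "X = R_class S z" by auto
    show "X \<subseteq> A"
    proof
      fix b assume "b \<in> X"
      then have "R_le S b z" "b \<in> S" using z unfolding R_class_def R_eq_def by auto
      then show "b \<in> A" using z assms(1,2) unfolding R_le_def right_ideal_def by auto
    qed
  qed
  ultimately show ?thesis unfolding R_chain_def by auto
qed

theorem theorem3p6:
  fixes S A :: "'a::semigroup_mult set" and n :: nat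
  assumes "subsemigroup S" and "S \<noteq> {}"
    and "R_height S < \<infinity>"
    and "right_ideal S A"
    and "\<exists>C. R_chain S C \<and> finite C \<and> (\<forall>X\<in>C. X \<subseteq> A) \<and> card C = n"
    and "\<forall>C. R_chain S C \<and> (\<forall>X\<in>C. X \<subseteq> A) \<longrightarrow> finite C \<and> card C \<le> n"
  shows "R_height A \<le> enat (2 * n - 1)"
proof -
  have AS: "A \<subseteq> S" and Ane: "A \<noteq> {}" and Aid: "\<forall>a\<in>A. \<forall>s\<in>S. a * s \<in> A"
    using assms(4) unfolding right_ideal_def by auto
  have Sc: "\<forall>x\<in>S. \<forall>y\<in>S. x * y \<in> S" using assms(1) unfolding subsemigroup_def by auto
  have Ac: "\<forall>x\<in>A. \<forall>y\<in>A. x * y \<in> A" using Aid AS by auto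
  have bound: "finite (R_class S ` Z) \<and> card (R_class S ` Z) \<le> n"
    if "Z \<subseteq> A" "\<forall>z\<in>Z. \<forall>z'\<in>Z. R_le S z z' \<or> R_le S z' z" for Z
    using chain_lemma[OF assms(4) that] assms(6) by blast
  obtain a0 where "a0 \<in> A" using Ane by auto
  then have "card (R_class S ` {a0}) \<le> n"
    using bound[of "{a0}"] unfolding R_le_def by auto
  then have n1: "n \<ge> 1" by simp
  have main: "card D \<le> 2 * n - 1" if D: "R_chain A D" "finite D" for D
  proof -
    have DA: "\<forall>X\<in>D. \<exists>a\<in>A. X = R_class A a"
      using D unfolding R_chain_def R_classes_def by auto
    define r where "r X = (SOME a. a \<in> A \<and> X = R_class A a)" for X
    have r: "r X \<in> A \<and> X = R_class A (r X)" if "X \<in> D" for X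
      using someI_ex[of "\<lambda>a. a \<in> A \<and> X = R_class A a"] DA that unfolding r_def by blast
    have cmpA: "R_le A (r X) (r Y) \<or> R_le A (r Y) (r X)" if "X \<in> D" "Y \<in> D" for X Y
    proof -
      have "R_class_le A X Y \<or> R_class_le A Y X" using D that unfolding R_chain_def by auto
      then obtain x y where xy: "x \<in> X" "y \<in> Y" "R_le A x y \<or> R_le A y x"
        unfolding R_class_le_def by blast
      have "R_eq A (r X) x" "R_eq A (r Y) y" using xy r that unfolding R_class_def by auto
      then show ?thesis using xy R_le_trans[OF Ac] unfolding R_eq_def by metis
    qed
    have cmpS: "R_le S (r X) (r Y) \<or> R_le S (r Y) (r X)" if "X \<in> D" "Y \<in> D" for X Y
      using cmpA[OF that] R_le_mono[OF AS] by blast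
    define good where "good a \<longleftrightarrow> (\<exists>u\<in>A. a * u = a)" for a
    define G where "G = {X\<in>D. good (r X)}"
    define B where "B = D - G"
    have GB: "G \<subseteq> D" "B \<subseteq> D" "G \<inter> B = {}" "D = G \<union> B" unfolding G_def B_def by auto
    have cardD: "card D = card G + card B"
      using GB D(2) by (metis card_Un_disjoint finite_subset)
    have eqclass: "X = Y" if "X \<in> D" "Y \<in> D" "R_eq A (r X) (r Y)" for X Y
      using r[OF that(1)] r[OF that(2)] R_class_eq[OF Ac that(3)] by simp
    have injG: "inj_on (\<lambda>X. R_class S (r X)) G"
    proof (rule inj_onI)
      fix X Y assume XY: "X \<in> G" "Y \<in> G" "R_class S (r X) = R_class S (r Y)"
      then have XD: "X \<in> D" "Y \<in> D" using GB by auto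
      have "r X \<in> R_class S (r Y)" using XY(3) R_class_self r[OF XD(1)] AS by blast
      then have eS: "R_eq S (r Y) (r X)" unfolding R_class_def by auto
      have up: "R_le A b a" if H: "good a" "R_le S b a" "a \<in> A" for a b
      proof -
        obtain u where u: "u \<in> A" "a * u = a" using H(1) unfolding good_def by blast
        show ?thesis
        proof (cases "b = a")
          case True then show ?thesis unfolding R_le_def by auto
        next
          case False
          then obtain s where s: "s \<in> S" "b = a * s" using H(2) unfolding R_le_def by auto
          then have "b = a * (u * s)" using u by (metis mult.assoc)
          moreover have "u * s \<in> A" using Aid u s by auto
          ultimately show ?thesis unfolding R_le_def by auto
        qed
      qed
      have "good (r X)" "good (r Y)" using XY unfolding G_def by auto
      then have "R_eq A (r X) (r Y)" using up eS r XD unfolding R_eq_def by blast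
      then show "X = Y" using eqclass XD by auto
    qed
    have injB: "inj_on (\<lambda>X. R_class S (r X)) B"
    proof (rule inj_onI)
      fix X Y assume XY: "X \<in> B" "Y \<in> B" "R_class S (r X) = R_class S (r Y)"
      then have XD: "X \<in> D" "Y \<in> D" using GB by auto
      have "r X \<in> R_class S (r Y)" using XY(3) R_class_self r[OF XD(1)] AS by blast
      then have eS: "R_eq S (r Y) (r X)" unfolding R_class_def by auto
      have ng: "\<not> good (r X)" "\<not> good (r Y)" using XY unfolding G_def B_def by auto
      have key: "a = b" if H: "R_le A a b" "R_le S b a" "\<not> good b" for a b
      proof (rule ccontr)
        assume "a \<noteq> b"
        then obtain t where t: "t \<in> A" "a = b * t" using H(1) unfolding R_le_def by auto
        show False
        proof (cases "b = a")
          case True then show False using \<open>a \<noteq> b\<close> by simp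
        next
          case False
          then obtain s where s: "s \<in> S" "b = a * s" using H(2) unfolding R_le_def by auto
          then have "b * (t * s) = b" using t by (metis mult.assoc)
          moreover have "t * s \<in> A" using Aid t s by auto
          ultimately show False using H(3) unfolding good_def by blast
        qed
      qed
      have "r X = r Y"
        using cmpA[OF XD] key ng eS unfolding R_eq_def by metis
      then show "X = Y" using r XD by metis
    qed
    have cG: "card G \<le> n"
    proof -
      have "card G = card (R_class S ` (r ` G))"
        using card_image[OF injG] by (simp add: image_image)
      also have "\<dots> \<le> n"
        using bound[of "r ` G"] r GB cmpS by blast
      finally show ?thesis .
    qed
    show ?thesis
    proof (cases "B = {}")
      case True
      then show ?thesis using cardD cG n1 by simp
    next
      case False
      have fB: "finite B" using GB D(2) finite_subset by blast
      have "\<exists>m\<in>r ` B. \<forall>x\<in>r ` B. R_le S m x"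
        apply (rule finite_min_rel)
        using fB False cmpS GB R_le_trans[OF Sc] by auto
      then obtain Y0 where Y0: "Y0 \<in> B" "\<forall>X\<in>B. R_le S (r Y0) (r X)" by auto
      define y0 where "y0 = r Y0"
      have y0A: "y0 \<in> A" using Y0 GB r y0_def by auto
      have ngy: "\<not> good y0" using Y0 unfolding y0_def G_def B_def by auto
      let ?Z = "insert (y0 * y0) (r ` B)"
      have yyA: "y0 * y0 \<in> A" using Ac y0A by auto
      have le1: "R_le S (y0 * y0) y0" using y0A AS unfolding R_le_def by auto
      have ZA: "?Z \<subseteq> A" using yyA r GB by auto
      have Zc: "\<forall>z\<in>?Z. \<forall>z'\<in>?Z. R_le S z z' \<or> R_le S z' z"
      proof -
        have "R_le S (y0 * y0) x" if "x \<in> r ` B" for x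
          using that Y0(2) le1 R_le_trans[OF Sc] unfolding y0_def by blast
        moreover have "R_le S (y0*y0) (y0*y0)" unfolding R_le_def by auto
        ultimately show ?thesis using cmpS GB by auto
      qed
      have notin: "R_class S (y0 * y0) \<notin> R_class S ` (r ` B)"
      proof
        assume "R_class S (y0 * y0) \<in> R_class S ` (r ` B)"
        then obtain X where X: "X \<in> B" "R_class S (y0 * y0) = R_class S (r X)" by auto
        have "y0 * y0 \<in> R_class S (r X)" using X R_class_self yyA AS by blast
        then have "R_le S (r X) (y0 * y0)" unfolding R_class_def R_eq_def by auto
        then have ll: "R_le S y0 (y0 * y0)" using Y0(2) X(1) R_le_trans[OF Sc] y0_def by blast
        show False
        proof (cases "y0 = y0 * y0")
          case True then show False using ngy y0A unfolding good_def by (metis)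
        next
          case False
          then obtain t where t: "t \<in> S" "y0 = y0 * y0 * t" using ll unfolding R_le_def by auto
          then have "y0 * (y0 * t) = y0" by (metis mult.assoc)
          moreover have "y0 * t \<in> A" using Aid y0A t by blast
          ultimately show False using ngy unfolding good_def by blast
        qed
      qed
      have bZ: "finite (R_class S ` ?Z) \<and> card (R_class S ` ?Z) \<le> n" using bound[OF ZA Zc] .
      have "R_class S ` ?Z = insert (R_class S (y0 * y0)) (R_class S ` (r ` B))" by simp
      then have "card (R_class S ` ?Z) = Suc (card (R_class S ` (r ` B)))"
        using notin fB by simp
      moreover have "card B = card (R_class S ` (r ` B))"
        using card_image[OF injB] by (simp add: image_image)
      ultimately have "card B + 1 \<le> n" using bZ by simp
      then show ?thesis using cardD cG by simp
    qed
  qed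
  show ?thesis unfolding R_height_def
    by (rule Sup_least) (auto dest: main)
qed

end
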